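(* For every graph $G$ on $n$ vertices and every finite field $\mathbb{F}$ of size $q$, \[\mathrm{minrk}_{\mathbb{F}}(G)\le \overline{\xi}_l(\overline{G},\mathbb{F})+\lceil\log_q n\rceil.\] In particular, $\mathrm{minrk}_{\mathbb{F}_2}(G)\le \overline{\xi}_l(\overline{G},\mathbb{F}_2)+\lceil\log_2 n\rceil$.
   Context: $\overline{G}$ is the complement of $G$. For a graph $H$ on $[n]$, a matrix $M\in\mathbb{F}^{n\times n}$ represents $H$ if $M_{i,i}\ne0$ for all $i$ and $M_{i,j}=0$ for distinct non-adjacent $i,j$; $\mathrm{minrk}_{\mathbb{F}}(H)$ is the minimum rank over $\mathbb{F}$ of such a matrix. An orthogonal representation of $H=(V,E)$ over $\mathbb{F}$ assigns $u_v\in\mathbb{F}^t$ to each $v$ with $\langle u_v,u_v\rangle\ne0$ and $\langle u_v,u_{v'}\rangle=0$ for adjacent $v,v'$, where $\langle x,y\rangle=\sum_i x_iy_i$. Its locality is $\max_v\dim\mathrm{span}\{u_{v'}:v'\in\{v\}\cup N(v)\}$ with $N(v)$ the neighborhood of $v$; $\overline{\xi}_l(H,\mathbb{F})$ is the minimum locality of an orthogonal representation of $H$ over $\mathbb{F}$. *)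

theory Defs
  imports "Jordan_Normal_Form.DL_Rank" "HOL.Transcendental"
begin

text \<open>Graphs on the vertex set [n] = {0..<n} are given by an edge relation E.\<close>

definition simple_graph :: "nat \<Rightarrow> (nat \<Rightarrow> nat \<Rightarrow> bool) \<Rightarrow> bool" where
  "simple_graph n E \<longleftrightarrow> (\<forall>i<n. \<forall>j<n. E i j \<longleftrightarrow> E j i) \<and> (\<forall>i<n. \<not> E i i)"

definition complement :: "(nat \<Rightarrow> nat \<Rightarrow> bool) \<Rightarrow> nat \<Rightarrow> nat \<Rightarrow> bool" where
  "complement E i j \<longleftrightarrow> i \<noteq> j \<and> \<not> E i j"

definition represents :: "nat \<Rightarrow> (nat \<Rightarrow> nat \<Rightarrow> bool) \<Rightarrow> 'a::field mat \<Rightarrow> bool" where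
  "represents n E M \<longleftrightarrow> M \<in> carrier_mat n n \<and> (\<forall>i<n. M $$ (i,i) \<noteq> 0)
     \<and> (\<forall>i<n. \<forall>j<n. i \<noteq> j \<and> \<not> E i j \<longrightarrow> M $$ (i,j) = 0)"

definition minrk :: "'a::field itself \<Rightarrow> nat \<Rightarrow> (nat \<Rightarrow> nat \<Rightarrow> bool) \<Rightarrow> nat" where
  "minrk F n E = (LEAST r. \<exists>M :: 'a mat. represents n E M \<and> vec_space.rank n M = r)"

definition orth_rep :: "nat \<Rightarrow> (nat \<Rightarrow> nat \<Rightarrow> bool) \<Rightarrow> nat \<Rightarrow> (nat \<Rightarrow> 'a::field vec) \<Rightarrow> bool" where
  "orth_rep n E t u \<longleftrightarrow> (\<forall>v<n. u v \<in> carrier_vec t \<and> u v \<bullet> u v \<noteq> 0)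
     \<and> (\<forall>v<n. \<forall>v'<n. E v v' \<longrightarrow> u v \<bullet> u v' = 0)"

definition span_dim :: "nat \<Rightarrow> 'a::field vec set \<Rightarrow> nat" where
  "span_dim t W = vectorspace.dim (class_ring :: 'a ring) ((module_vec TYPE('a) t)\<lparr>carrier := LinearCombinations.module.span class_ring (module_vec TYPE('a) t) W\<rparr>)"

definition locality :: "nat \<Rightarrow> (nat \<Rightarrow> nat \<Rightarrow> bool) \<Rightarrow> nat \<Rightarrow> (nat \<Rightarrow> 'a::field vec) \<Rightarrow> nat" where
  "locality n E t u = Max {span_dim t (u ` {v'. v' < n \<and> (v' = v \<or> E v v')}) | v. v < n}"

definition xi_bar_l :: "'a::field itself \<Rightarrow> nat \<Rightarrow> (nat \<Rightarrow> nat \<Rightarrow> bool) \<Rightarrow> nat" where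
  "xi_bar_l F n E = (LEAST k. \<exists>t (u :: nat \<Rightarrow> 'a vec). orth_rep n E t u \<and> locality n E t u = k)"

end

theory Submission
  imports Defs
begin

lemma (in vectorspace) card_carrier_le:
  assumes "fin_dim" "finite (carrier K)"
  shows "card (carrier V) \<le> card (carrier K) ^ dim"
proof -
  obtain \<beta> where b: "finite \<beta>" "basis \<beta>" using finite_basis_exists assms by blast
  hence d: "dim = card \<beta>" using dim_basis by auto
  have bc: "\<beta> \<subseteq> carrier V" "span \<beta> = carrier V" using b basis_def by auto
  have "carrier V \<subseteq> (\<lambda>a. lincomb a \<beta>) ` (\<beta> \<rightarrow>\<^sub>E carrier K)"
  proof
    fix v assume "v \<in> carrier V"
    then obtain a where a: "a \<in> \<beta> \<rightarrow> carrier K" "lincomb a \<beta> = v"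
      using finite_in_span[of \<beta> v] bc b by auto
    have "lincomb (restrict a \<beta>) \<beta> = v"
      using a bc by (metis lincomb_cong restrict_apply')
    moreover have "restrict a \<beta> \<in> \<beta> \<rightarrow>\<^sub>E carrier K" using a by auto
    ultimately show "v \<in> (\<lambda>a. lincomb a \<beta>) ` (\<beta> \<rightarrow>\<^sub>E carrier K)" by blast
  qed
  hence "card (carrier V) \<le> card (\<beta> \<rightarrow>\<^sub>E carrier K)"
    by (meson assms(2) b(1) card_image_le card_mono finite_PiE finite_imageI order_trans)
  also have "\<dots> = card (carrier K) ^ dim" using b d by (simp add: card_PiE)
  finally show ?thesis .
qed



inductive inspan :: "nat \<Rightarrow> 'a::field vec list \<Rightarrow> 'a vec \<Rightarrow> bool" for r where
  inspan_nil: "inspan r [] (0\<^sub>v r)"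
| inspan_cons: "inspan r xs z \<Longrightarrow> inspan r (x # xs) (a \<cdot>\<^sub>v x + z)"

lemma inspan_carrier: "inspan r xs z \<Longrightarrow> set xs \<subseteq> carrier_vec r \<Longrightarrow> z \<in> carrier_vec r"
  by (induction rule: inspan.induct) auto

lemma inspan_orth: "inspan r xs z \<Longrightarrow> set xs \<subseteq> carrier_vec r \<Longrightarrow> y \<in> carrier_vec r
   \<Longrightarrow> (\<forall>w\<in>set xs. y \<bullet> w = 0) \<Longrightarrow> y \<bullet> z = 0"
proof (induction rule: inspan.induct)
  case inspan_nil then show ?case by simp
next
  case (inspan_cons xs z x a)
  have zc: "z \<in> carrier_vec r" using inspan_carrier inspan_cons by auto
  have xc: "x \<in> carrier_vec r" using inspan_cons by auto
  have "y \<bullet> (a \<cdot>\<^sub>v x + z) = y \<bullet> (a \<cdot>\<^sub>v x) + y \<bullet> z"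
    using scalar_prod_add_distrib[of y r "a \<cdot>\<^sub>v x" z] zc xc inspan_cons by auto
  then show ?case using inspan_cons xc by auto
qed

lemma dual_exists:
  fixes xs :: "'a::field vec list"
  shows "set xs \<subseteq> carrier_vec r \<Longrightarrow> x \<in> carrier_vec r \<Longrightarrow> \<not> inspan r xs x
    \<Longrightarrow> \<exists>y\<in>carrier_vec r. (\<forall>w\<in>set xs. y \<bullet> w = 0) \<and> y \<bullet> x = 1"
proof (induction xs arbitrary: x)
  case Nil
  have "x \<noteq> 0\<^sub>v r" using Nil inspan_nil by metis
  then obtain p where p: "p < r" "x $ p \<noteq> 0" using Nil(2) by (metis eq_vecI carrier_vecD index_zero_vec)
  define y where "y = (1 / x $ p) \<cdot>\<^sub>v unit_vec r p"
  have "y \<bullet> x = 1" unfolding y_def using p Nil(2) by simp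
  then show ?case unfolding y_def by auto
next
  case (Cons w ws)
  have wc: "w \<in> carrier_vec r" and wsc: "set ws \<subseteq> carrier_vec r" using Cons by auto
  have nx: "\<not> inspan r ws x"
  proof
    assume "inspan r ws x"
    then have "inspan r (w # ws) (0 \<cdot>\<^sub>v w + x)" by (rule inspan_cons)
    moreover have "0 \<cdot>\<^sub>v w + x = x" using wc Cons(3) by auto
    ultimately show False using Cons(4) by simp
  qed
  show ?case
  proof (cases "inspan r ws w")
    case True
    obtain y1 where y1: "y1 \<in> carrier_vec r" "\<forall>w\<in>set ws. y1 \<bullet> w = 0" "y1 \<bullet> x = 1"
      using Cons.IH[OF wsc Cons(3) nx] by blast
    have "y1 \<bullet> w = 0" using inspan_orth[OF True wsc y1(1) y1(2)] .
    then show ?thesis using y1 by auto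
  next
    case False
    obtain y2 where y2: "y2 \<in> carrier_vec r" "\<forall>w\<in>set ws. y2 \<bullet> w = 0" "y2 \<bullet> w = 1"
      using Cons.IH[OF wsc wc False] by blast
    define z where "z = x - (y2 \<bullet> x) \<cdot>\<^sub>v w"
    have zc: "z \<in> carrier_vec r" unfolding z_def using wc Cons(3) by auto
    have nz: "\<not> inspan r ws z"
    proof
      assume "inspan r ws z"
      then have "inspan r (w # ws) ((y2 \<bullet> x) \<cdot>\<^sub>v w + z)" by (rule inspan_cons)
      moreover have "(y2 \<bullet> x) \<cdot>\<^sub>v w + z = x" unfolding z_def using wc Cons(3)
        by (intro eq_vecI) auto
      ultimately show False using Cons(4) by simp
    qed
    obtain y3 where y3: "y3 \<in> carrier_vec r" "\<forall>w\<in>set ws. y3 \<bullet> w = 0" "y3 \<bullet> z = 1"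
      using Cons.IH[OF wsc zc nz] by blast
    define y where "y = y3 - (y3 \<bullet> w) \<cdot>\<^sub>v y2"
    have yc: "y \<in> carrier_vec r" unfolding y_def using y3 y2 by auto
    have yws: "y \<bullet> v = y3 \<bullet> v - (y3 \<bullet> w) * (y2 \<bullet> v)" if "v \<in> carrier_vec r" for v
      unfolding y_def using minus_scalar_prod_distrib[of y3 r "(y3 \<bullet> w) \<cdot>\<^sub>v y2" v] that y2 y3 by auto
    have "y \<bullet> w = 0" using yws[OF wc] y2 by simp
    moreover have "\<forall>v\<in>set ws. y \<bullet> v = 0" using yws wsc y2 y3 by auto
    moreover have "y2 \<bullet> z = 0" unfolding z_def
      using scalar_prod_minus_distrib[of y2 r x "(y2 \<bullet> x) \<cdot>\<^sub>v w"] y2 wc Cons(3) by auto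
    moreover have "x = z + (y2 \<bullet> x) \<cdot>\<^sub>v w" unfolding z_def using wc Cons(3)
        by (intro eq_vecI) auto
    ultimately have e: "y2 \<bullet> z = 0" "x = z + (y2 \<bullet> x) \<cdot>\<^sub>v w" by auto
    have "y \<bullet> x = y3 \<bullet> x - (y3 \<bullet> w) * (y2 \<bullet> x)" using yws[OF Cons(3)] .
    also have "y3 \<bullet> x = y3 \<bullet> z + (y2 \<bullet> x) * (y3 \<bullet> w)"
      apply (subst e(2)) using scalar_prod_add_distrib[of y3 r z "(y2 \<bullet> x) \<cdot>\<^sub>v w"] y3 zc wc by simp
    finally have "y \<bullet> x = 1" using y3 by (simp add: algebra_simps)
    then show ?thesis using yc \<open>y \<bullet> w = 0\<close> \<open>\<forall>v\<in>set ws. y \<bullet> v = 0\<close> by auto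
  qed
qed



lemma rank_sum_le:
  fixes f g :: "nat \<Rightarrow> nat \<Rightarrow> 'a::field"
  shows "vec_space.rank n (mat n n (\<lambda>(i,j). \<Sum>a<r. f a i * g a j)) \<le> r"
proof (induction r)
  case 0
  have eq: "mat n n (\<lambda>(i,j). \<Sum>a<0. f a i * g a j) = (0\<^sub>m n n :: 'a mat)" by (intro eq_matI) auto
  show ?case unfolding eq using vec_space.rank_0I by simp
next
  case (Suc r)
  have "mat n n (\<lambda>(i,j). \<Sum>a<Suc r. f a i * g a j) =
        mat n n (\<lambda>(i,j). \<Sum>a<r. f a i * g a j) + mat n n (\<lambda>(i,j). f r i * g r j)"
    by (intro eq_matI) auto
  moreover have "vec_space.rank n (mat n n (\<lambda>(i,j). f r i * g r j)) \<le> 1"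
    by (rule vec_space.rank_le_1_product_entries[of _ n n]) auto
  moreover have "vec_space.rank n (mat n n (\<lambda>(i,j). \<Sum>a<r. f a i * g a j) + mat n n (\<lambda>(i,j). f r i * g r j))
     \<le> vec_space.rank n (mat n n (\<lambda>(i,j). \<Sum>a<r. f a i * g a j)) + vec_space.rank n (mat n n (\<lambda>(i,j). f r i * g r j))"
    by (rule vec_space.rank_subadditive[of _ n n]) auto
  ultimately show ?case using Suc by simp
qed

lemma card_carrier_vec: "card (carrier_vec t :: 'a::finite vec set) = card (UNIV::'a set) ^ t"
  and finite_carrier_vec: "finite (carrier_vec t :: 'a::finite vec set)"
proof -
  have b: "bij_betw (\<lambda>f. vec t f) ({0..<t} \<rightarrow>\<^sub>E (UNIV::'a set)) (carrier_vec t)"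
  proof (rule bij_betwI')
    fix f g assume "f \<in> {0..<t} \<rightarrow>\<^sub>E (UNIV::'a set)" "g \<in> {0..<t} \<rightarrow>\<^sub>E (UNIV::'a set)"
    then show "(vec t f = vec t g) = (f = g)"
      by (metis (no_types, lifting) PiE_ext atLeastLessThan_iff index_vec)
  next
    fix f :: "nat \<Rightarrow> 'a" show "f \<in> {0..<t} \<rightarrow>\<^sub>E UNIV \<Longrightarrow> vec t f \<in> carrier_vec t" by simp
  next
    fix v :: "'a vec" assume "v \<in> carrier_vec t"
    then have "v = vec t (restrict (\<lambda>i. v $ i) {0..<t})" by (intro eq_vecI) auto
    then show "\<exists>f\<in>{0..<t} \<rightarrow>\<^sub>E UNIV. v = vec t f"
      by (rule bexI[of _ "restrict (\<lambda>i. v $ i) {0..<t}"]) auto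
  qed
  show "card (carrier_vec t :: 'a::finite vec set) = card (UNIV::'a set) ^ t"
    using bij_betw_same_card[OF b] by (simp add: card_PiE)
  show "finite (carrier_vec t :: 'a::finite vec set)"
    using bij_betw_finite[OF b] by (simp add: finite_PiE)
qed




context vec_space begin
lemma span_closed:
  assumes W: "W \<subseteq> carrier_vec n"
  shows "0\<^sub>v n \<in> span W" "a \<in> span W \<Longrightarrow> b \<in> span W \<Longrightarrow> a + b \<in> span W"
    "x \<in> span W \<Longrightarrow> c \<cdot>\<^sub>v x \<in> span W" "span W \<subseteq> carrier_vec n" "W \<subseteq> span W"
proof -
  interpret S: LinearCombinations.submodule class_ring "span W" V using span_is_submodule W by simp
  show "0\<^sub>v n \<in> span W" using S.zero_closed by (simp add: module_vec_simps)
  show "a \<in> span W \<Longrightarrow> b \<in> span W \<Longrightarrow> a + b \<in> span W" using S.m_closed by (simp add: module_vec_simps)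
  show "x \<in> span W \<Longrightarrow> c \<cdot>\<^sub>v x \<in> span W" using S.smult_closed by (simp add: module_vec_simps class_ring_simps)
  show "span W \<subseteq> carrier_vec n" using S.subset by (simp add: module_vec_simps)
  show "W \<subseteq> span W" using in_own_span W by simp
qed

end

lemma span_card:
  fixes W :: "'a::{field,finite} vec set"
  assumes W: "W \<subseteq> carrier_vec t" "finite W"
  shows "card (LinearCombinations.module.span class_ring (module_vec TYPE('a) t) W) \<le> card (UNIV :: 'a set) ^ span_dim t W"
proof -
  interpret vec_space "TYPE('a)" t .
  have vs: "vectorspace class_ring (vs (span W))"
    using W span_is_subspace subspace_def subspace_is_vs by simp
  have fd: "vectorspace.fin_dim class_ring (vs (span W))" using fin_dim_span W by simp
  show ?thesis unfolding span_dim_def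
    using vectorspace.card_carrier_le[OF vs fd] by (simp add: class_ring_simps)
qed


lemma inspan_pull:
  fixes F :: "nat \<Rightarrow> 'a::field vec"
  assumes T: "T \<subseteq> carrier_vec t" "0\<^sub>v t \<in> T" "\<And>a w w'. w \<in> T \<Longrightarrow> w' \<in> T \<Longrightarrow> a \<cdot>\<^sub>v w + w' \<in> T"
    and u0: "u0 \<in> carrier_vec t" and F: "\<And>a. a < r \<Longrightarrow> F a \<in> carrier_vec t"
  shows "inspan r (map (\<lambda>w. vec r (\<lambda>a. F a \<bullet> w)) ws) z \<Longrightarrow> set ws \<subseteq> T \<Longrightarrow> \<forall>w\<in>set ws. u0 \<bullet> w = 0
    \<Longrightarrow> \<exists>w\<in>T. u0 \<bullet> w = 0 \<and> vec r (\<lambda>a. F a \<bullet> w) = z"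
proof (induction ws arbitrary: z)
  case Nil
  then have "z = 0\<^sub>v r" by (auto elim: inspan.cases)
  moreover have "vec r (\<lambda>a. F a \<bullet> 0\<^sub>v t) = 0\<^sub>v r" using F by (intro eq_vecI) auto
  ultimately show ?case using T u0 by (intro bexI[of _ "0\<^sub>v t"]) auto
next
  case (Cons w ws)
  from Cons(2) obtain a z' where z: "z = a \<cdot>\<^sub>v vec r (\<lambda>a. F a \<bullet> w) + z'"
    and i: "inspan r (map (\<lambda>w. vec r (\<lambda>a. F a \<bullet> w)) ws) z'"
    by (auto elim: inspan.cases)
  obtain w' where w': "w' \<in> T" "u0 \<bullet> w' = 0" "vec r (\<lambda>a. F a \<bullet> w') = z'"
    using Cons.IH[OF i] Cons(3,4) by auto
  have wc: "w \<in> carrier_vec t" "w' \<in> carrier_vec t" using Cons(3) w'(1) T(1) by auto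
  have "a \<cdot>\<^sub>v w + w' \<in> T" using T(3) w'(1) Cons(3) by auto
  moreover have "u0 \<bullet> (a \<cdot>\<^sub>v w + w') = 0"
    using scalar_prod_add_distrib[of u0 t "a \<cdot>\<^sub>v w" w'] wc u0 w'(2) Cons(4) by auto
  moreover have "vec r (\<lambda>b. F b \<bullet> (a \<cdot>\<^sub>v w + w')) = z"
    unfolding z w'(3)[symmetric]
  proof (intro eq_vecI)
    fix b assume "b < dim_vec (a \<cdot>\<^sub>v vec r (\<lambda>a. F a \<bullet> w) + vec r (\<lambda>a. F a \<bullet> w'))"
    then have b: "b < r" by simp
    show "vec r (\<lambda>b. F b \<bullet> (a \<cdot>\<^sub>v w + w')) $ b = (a \<cdot>\<^sub>v vec r (\<lambda>a. F a \<bullet> w) + vec r (\<lambda>a. F a \<bullet> w')) $ b"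
      using b scalar_prod_add_distrib[of "F b" t "a \<cdot>\<^sub>v w" w'] F[OF b] wc by auto
  qed auto
  ultimately show ?case by blast
qed

lemma ker_card:
  fixes x :: "'a::{field,finite} vec"
  assumes x: "x \<in> carrier_vec t" "x \<noteq> 0\<^sub>v t"
    and cv: "card (carrier_vec t :: 'a vec set) = card (UNIV::'a set) ^ t"
    and fv: "finite (carrier_vec t :: 'a vec set)"
  shows "card {f \<in> carrier_vec t. f \<bullet> x = 0} * card (UNIV::'a set) \<le> card (UNIV::'a set) ^ t"
proof -
  obtain p where p: "p < t" "x $ p \<noteq> 0" using x by (metis eq_vecI carrier_vecD index_zero_vec)
  define K where "K = {f \<in> carrier_vec t. f \<bullet> x = 0}"
  define h :: "'a vec \<times> 'a \<Rightarrow> 'a vec" where "h = (\<lambda>(f, c). f + c \<cdot>\<^sub>v unit_vec t p)"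
  have hx: "h (f, c) \<bullet> x = c * x $ p" if "f \<in> K" for f c
    using that x p add_scalar_prod_distrib[of f t "c \<cdot>\<^sub>v unit_vec t p" x] unfolding h_def K_def by auto
  have inj: "inj_on h (K \<times> UNIV)"
  proof (rule inj_onI)
    fix fc gd assume a: "fc \<in> K \<times> UNIV" "gd \<in> K \<times> UNIV" "h fc = h gd"
    obtain f c g d where fc: "fc = (f, c)" "gd = (g, d)" by fastforce
    have "c * x $ p = d * x $ p" using hx a fc by (metis SigmaE prod.inject)
    then have cd: "c = d" using p by simp
    have "f = g"
    proof (intro eq_vecI)
      show "dim_vec f = dim_vec g" using a fc K_def by auto
      fix i assume "i < dim_vec g"
      then have i: "i < t" using a fc K_def by auto
      have e: "f + d \<cdot>\<^sub>v unit_vec t p = g + d \<cdot>\<^sub>v unit_vec t p" using a(3) fc cd unfolding h_def by simp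
      have fg: "f \<in> carrier_vec t" "g \<in> carrier_vec t" using a fc K_def by auto
      have "(f + d \<cdot>\<^sub>v unit_vec t p) $ i = f $ i + d * unit_vec t p $ i" using i fg by simp
      moreover have "(g + d \<cdot>\<^sub>v unit_vec t p) $ i = g $ i + d * unit_vec t p $ i" using i fg by simp
      ultimately show "f $ i = g $ i" using e by simp
    qed
    then show "fc = gd" using fc cd by simp
  qed
  have "h ` (K \<times> UNIV) \<subseteq> carrier_vec t" unfolding h_def K_def by auto
  then have "card (K \<times> (UNIV::'a set)) \<le> card (carrier_vec t :: 'a vec set)"
    using card_inj_on_le[OF inj _ fv] by blast
  then show ?thesis unfolding K_def[symmetric] using cv by (simp add: card_cartesian_product)
qed


theorem mainTheorem13:
  fixes E :: "nat \<Rightarrow> nat \<Rightarrow> bool" and n :: nat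
  assumes "simple_graph n E"
  shows "int (minrk TYPE('a::{field,finite}) n E)
           \<le> int (xi_bar_l TYPE('a) n (complement E)) + \<lceil>log (real (card (UNIV :: 'a set))) (real n)\<rceil>"
proof -
  define q where "q = card (UNIV :: 'a set)"
  define k where "k = xi_bar_l TYPE('a) n (complement E)"
  have q2: "q \<ge> 2"
  proof -
    have "card {0::'a, 1} = 2" by simp
    moreover have "card {0::'a, 1} \<le> q" unfolding q_def by (rule card_mono) auto
    ultimately show ?thesis by simp
  qed
  have minrk_le: "minrk TYPE('a) n E \<le> vec_space.rank n M" if "represents n E (M :: 'a mat)" for M
    unfolding minrk_def using that by (intro Least_le) blast
  show ?thesis
  proof (cases "n = 0")
    case True
    have "represents n E (0\<^sub>m 0 0 :: 'a mat)" unfolding represents_def using True by auto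
    then have "minrk TYPE('a) n E \<le> 0" using minrk_le[of "0\<^sub>m 0 0"] True vec_space.rank_0I by metis
    then show ?thesis using True by (simp add: log_def)
  next
    case False
    then have n1: "n \<ge> 1" by simp
    have ex: "\<exists>k t (u::nat \<Rightarrow> 'a vec). orth_rep n (complement E) t u \<and> locality n (complement E) t u = k"
    proof -
      have "orth_rep n (complement E) n (\<lambda>v. unit_vec n v :: 'a vec)"
        unfolding orth_rep_def complement_def by auto
      then show ?thesis by blast
    qed
    obtain t and u :: "nat \<Rightarrow> 'a vec" where ou: "orth_rep n (complement E) t u"
      and lk: "locality n (complement E) t u = k"
      using LeastI_ex[OF ex] unfolding k_def xi_bar_l_def by blast
    have uc: "\<And>v. v < n \<Longrightarrow> u v \<in> carrier_vec t" and un: "\<And>v. v < n \<Longrightarrow> u v \<bullet> u v \<noteq> 0"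
      and uo: "\<And>v v'. v < n \<Longrightarrow> v' < n \<Longrightarrow> complement E v v' \<Longrightarrow> u v \<bullet> u v' = 0"
      using ou unfolding orth_rep_def by auto
    define N where "N v = {v'. v' < n \<and> (v' = v \<or> complement E v v')}" for v
    define S where "S v = LinearCombinations.module.span class_ring (module_vec TYPE('a) t) (u ` N v)" for v
    have Nsub: "u ` N v \<subseteq> carrier_vec t" for v using uc unfolding N_def by auto
    have fv: "finite (carrier_vec t :: 'a vec set)" by (rule finite_carrier_vec)
    have Sc: "0\<^sub>v t \<in> S v" "\<And>a w w'. w \<in> S v \<Longrightarrow> w' \<in> S v \<Longrightarrow> a \<cdot>\<^sub>v w + w' \<in> S v"
       "S v \<subseteq> carrier_vec t" "u ` N v \<subseteq> S v" for v
    proof -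
      interpret vec_space "TYPE('a)" t .
      show "0\<^sub>v t \<in> S v" "S v \<subseteq> carrier_vec t" "u ` N v \<subseteq> S v"
        unfolding S_def using span_closed[OF Nsub] by auto
      show "\<And>a w w'. w \<in> S v \<Longrightarrow> w' \<in> S v \<Longrightarrow> a \<cdot>\<^sub>v w + w' \<in> S v"
        unfolding S_def using span_closed[OF Nsub] by auto
    qed
    have Sfin: "finite (S v)" for v using Sc(3) fv finite_subset by blast
    have Scard: "card (S v) \<le> q ^ k" if "v < n" for v
    proof -
      have "span_dim t (u ` N v) \<le> locality n (complement E) t u"
        unfolding locality_def N_def
      proof (rule Max_ge)
        have "{span_dim t (u ` {v'. v' < n \<and> (v' = v \<or> complement E v v')}) |v. v < n}
           = (\<lambda>v. span_dim t (u ` {v'. v' < n \<and> (v' = v \<or> complement E v v')})) ` {..<n}" by auto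
        then show "finite {span_dim t (u ` {v'. v' < n \<and> (v' = v \<or> complement E v v')}) |v. v < n}" by simp
      qed (use that in blast)
      then have "q ^ span_dim t (u ` N v) \<le> q ^ k" using lk q2 by (intro power_increasing) auto
      moreover have "card (S v) \<le> q ^ span_dim t (u ` N v)"
        unfolding S_def q_def using span_card[OF Nsub] fv finite_subset Nsub by (metis finite_imageI finite_subset)
      ultimately show ?thesis by simp
    qed
    define c where "c = nat \<lceil>log (real q) (real n)\<rceil>"
    have lpos: "log (real q) (real n) \<ge> 0" using q2 n1 by simp
    have cint: "int c = \<lceil>log (real q) (real n)\<rceil>" unfolding c_def using lpos by simp
    have nc: "n \<le> q ^ c"
    proof -
      have "real n = real q powr (log (real q) (real n))" using q2 n1 by simp
      also have "\<dots> \<le> real q powr (real c)"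
        using q2 cint by (intro powr_mono) (simp_all, linarith)
      also have "\<dots> = real (q ^ c)" using q2 by (simp add: powr_realpow)
      finally show ?thesis by linarith
    qed
    define r where "r = k + c"
    define Ls where "Ls = {0..<r} \<rightarrow>\<^sub>E (carrier_vec t :: 'a vec set)"
    define K where "K x = {f \<in> carrier_vec t. f \<bullet> x = (0::'a)}" for x
    define Bad where "Bad = (\<Union>v\<in>{..<n}. \<Union>x\<in>S v - {0\<^sub>v t}. {0..<r} \<rightarrow>\<^sub>E K x)"
    have cLs: "card Ls = q ^ (t * r)" unfolding Ls_def q_def
      by (simp add: card_PiE card_carrier_vec power_mult)
    have cbx: "card ({0..<r} \<rightarrow>\<^sub>E K x) * q ^ r \<le> q ^ (t * r)" if "x \<in> S v - {0\<^sub>v t}" for v x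
    proof -
      have "card (K x) * q \<le> q ^ t" unfolding K_def q_def
        using ker_card[of x t] that Sc(3) card_carrier_vec fv by blast
      then have "(card (K x) * q) ^ r \<le> (q ^ t) ^ r" by (rule power_mono) simp
      then show ?thesis by (simp add: card_PiE power_mult_distrib power_mult)
    qed
    have "card Bad \<le> (\<Sum>v\<in>{..<n}. card (\<Union>x\<in>S v - {0\<^sub>v t}. {0..<r} \<rightarrow>\<^sub>E K x))"
      unfolding Bad_def by (rule card_UN_le) simp
    also have "\<dots> \<le> (\<Sum>v\<in>{..<n}. \<Sum>x\<in>S v - {0\<^sub>v t}. card ({0..<r} \<rightarrow>\<^sub>E K x))"
      by (intro sum_mono card_UN_le) (simp add: Sfin)
    finally have "card Bad * q ^ r \<le> (\<Sum>v\<in>{..<n}. \<Sum>x\<in>S v - {0\<^sub>v t}. card ({0..<r} \<rightarrow>\<^sub>E K x)) * q ^ r"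
      by simp
    also have "\<dots> = (\<Sum>v\<in>{..<n}. \<Sum>x\<in>S v - {0\<^sub>v t}. card ({0..<r} \<rightarrow>\<^sub>E K x) * q ^ r)"
      by (simp add: sum_distrib_right)
    also have "\<dots> \<le> (\<Sum>v\<in>{..<n}. \<Sum>x\<in>S v - {0\<^sub>v t}. q ^ (t * r))"
      by (intro sum_mono cbx) auto
    also have "\<dots> = (\<Sum>v\<in>{..<n}. card (S v - {0\<^sub>v t}) * q ^ (t * r))" by simp
    also have "\<dots> \<le> (\<Sum>v\<in>{..<n}. (q ^ k - 1) * q ^ (t * r))"
    proof (intro sum_mono mult_right_mono)
      fix v assume "v \<in> {..<n}"
      then show "card (S v - {0\<^sub>v t}) \<le> q ^ k - 1" using Scard[of v] Sc(1)[of v] Sfin[of v]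
        by (simp add: card_Diff_singleton)
    qed simp
    also have "\<dots> = n * (q ^ k - 1) * q ^ (t * r)" by simp
    finally have cB: "card Bad * q ^ r \<le> n * (q ^ k - 1) * q ^ (t * r)" .
    have "n * (q ^ k - 1) < n * q ^ k" using n1 q2 by (simp add: diff_less)
    also have "\<dots> \<le> q ^ c * q ^ k" using nc by simp
    also have "\<dots> = q ^ r" unfolding r_def by (simp add: power_add)
    finally have "n * (q ^ k - 1) < q ^ r" .
    then have lt: "n * (q ^ k - 1) * q ^ (t * r) < q ^ r * q ^ (t * r)" using q2 by simp
    have "card Bad * q ^ r < q ^ (t * r) * q ^ r" using cB lt by (metis le_less_trans mult.commute)
    then have "card Bad < q ^ (t * r)" by (metis mult_less_cancel2)
    then have "card Bad < card Ls" unfolding cLs .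
    moreover have "finite Bad" unfolding Bad_def K_def using Sfin fv by (auto intro!: finite_PiE)
    ultimately have "\<not> Ls \<subseteq> Bad" using card_mono leD by blast
    then obtain F where FL: "F \<in> Ls" and FB: "F \<notin> Bad" by blast
    have Fc: "\<And>a. a < r \<Longrightarrow> F a \<in> carrier_vec t" using FL unfolding Ls_def by auto
    have Fgood: "\<exists>a<r. F a \<bullet> x \<noteq> 0" if "v < n" "x \<in> S v" "x \<noteq> 0\<^sub>v t" for v x
    proof (rule ccontr)
      assume "\<not> (\<exists>a<r. F a \<bullet> x \<noteq> 0)"
      then have "F \<in> {0..<r} \<rightarrow>\<^sub>E K x" using FL unfolding Ls_def K_def by auto
      then have "F \<in> Bad" unfolding Bad_def using that by blast
      then show False using FB by simp
    qed
    define L where "L w = vec r (\<lambda>a. F a \<bullet> w)" for w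
    define xv where "xv i = L (u i)" for i
    define nb where "nb j = filter (complement E j) [0..<n]" for j
    have xvc: "xv i \<in> carrier_vec r" for i unfolding xv_def L_def by simp
    have key: "\<not> inspan r (map xv (nb j)) (xv j)" if j: "j < n" for j
    proof
      assume a: "inspan r (map xv (nb j)) (xv j)"
      have eqm: "map xv (nb j) = map (\<lambda>w. vec r (\<lambda>a. F a \<bullet> w)) (map u (nb j))"
        unfolding xv_def L_def by simp
      have a': "inspan r (map (\<lambda>w. vec r (\<lambda>a. F a \<bullet> w)) (map u (nb j))) (xv j)"
        using a unfolding eqm .
      have s1: "set (map u (nb j)) \<subseteq> S j" using Sc(4)[of j] unfolding nb_def N_def by auto
      have s2: "\<forall>w\<in>set (map u (nb j)). u j \<bullet> w = 0" using uo j unfolding nb_def by auto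
      have S3: "S j \<subseteq> carrier_vec t" and S1: "0\<^sub>v t \<in> S j" using Sc(1,3) by blast+
      have S2: "\<And>a w w'. w \<in> S j \<Longrightarrow> w' \<in> S j \<Longrightarrow> a \<cdot>\<^sub>v w + w' \<in> S j" using Sc(2) by blast
      obtain w where w: "w \<in> S j" "u j \<bullet> w = 0" "vec r (\<lambda>a. F a \<bullet> w) = xv j"
        using inspan_pull[of "S j" t "u j" r F "map u (nb j)" "xv j", OF S3 S1 S2 uc[OF j] Fc a' s1 s2]
        by blast
      have wc: "w \<in> carrier_vec t" using w Sc(3) by auto
      have ujS: "u j \<in> S j" using Sc(4)[of j] j unfolding N_def by auto
      define d where "d = (-1) \<cdot>\<^sub>v w + u j"
      have dS: "d \<in> S j" unfolding d_def using Sc(2) w(1) ujS by blast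
      have "u j \<bullet> d = u j \<bullet> u j" unfolding d_def
        using scalar_prod_add_distrib[of "u j" t "(-1) \<cdot>\<^sub>v w" "u j"] wc uc[OF j] w(2) by simp
      then have "d \<noteq> 0\<^sub>v t" using un[OF j] uc[OF j] by auto
      moreover have "F a \<bullet> d = 0" if "a < r" for a
      proof -
        have "F a \<bullet> w = F a \<bullet> u j" using arg_cong[OF w(3), of "\<lambda>v. v $ a"] that
          unfolding xv_def L_def by simp
        then show ?thesis unfolding d_def
          using scalar_prod_add_distrib[of "F a" t "(-1) \<cdot>\<^sub>v w" "u j"] wc uc[OF j] Fc[OF that] by simp
      qed
      ultimately show False using Fgood[OF j dS] by blast
    qed
    have "\<forall>j. \<exists>y. j < n \<longrightarrow> y \<in> carrier_vec r \<and> (\<forall>w\<in>set (map xv (nb j)). y \<bullet> w = 0) \<and> y \<bullet> xv j = 1"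
    proof
      fix j show "\<exists>y. j < n \<longrightarrow> y \<in> carrier_vec r \<and> (\<forall>w\<in>set (map xv (nb j)). y \<bullet> w = 0) \<and> y \<bullet> xv j = 1"
      proof (cases "j < n")
        case True
        have "set (map xv (nb j)) \<subseteq> carrier_vec r" using xvc by auto
        from dual_exists[OF this xvc key[OF True]] show ?thesis by blast
      qed auto
    qed
    then obtain y where y: "\<And>j. j < n \<Longrightarrow> y j \<in> carrier_vec r"
       "\<And>j. j < n \<Longrightarrow> \<forall>w\<in>set (map xv (nb j)). y j \<bullet> w = 0" "\<And>j. j < n \<Longrightarrow> y j \<bullet> xv j = 1"
      by metis
    define M :: "'a mat" where "M = mat n n (\<lambda>(i,j). \<Sum>a<r. (y i $ a) * (xv j $ a))"
    have Mij: "M $$ (i,j) = y i \<bullet> xv j" if "i < n" "j < n" for i j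
      unfolding M_def scalar_prod_def using that xvc[of j] by (simp add: atLeast0LessThan)
    have "represents n E M" unfolding represents_def
    proof (intro conjI allI impI)
      show "M \<in> carrier_mat n n" unfolding M_def by simp
    next
      fix i assume "i < n" then show "M $$ (i, i) \<noteq> 0" using Mij y(3) by simp
    next
      fix i j assume a: "i < n" "j < n" "i \<noteq> j \<and> \<not> E i j"
      then have "j \<in> set (nb i)" unfolding nb_def complement_def by auto
      then show "M $$ (i, j) = 0" using Mij[OF a(1,2)] y(2)[OF a(1)] by simp
    qed
    moreover have "vec_space.rank n M \<le> r" unfolding M_def by (rule rank_sum_le)
    ultimately have "minrk TYPE('a) n E \<le> r" using minrk_le by (meson order_trans)
    then have m: "int (minrk TYPE('a) n E) \<le> int k + int c" unfolding r_def by linarith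
    from m[unfolded k_def cint[unfolded q_def]] show ?thesis .
  qed
qed

end
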